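(* Let $k\ge 4$ be an integer and let $\alpha_1,\ldots,\alpha_k$ be the (complex) roots of $f_k(X)=X^k-X^{k-1}-\cdots-X-1$. Then $$|\alpha_i-\alpha_j|>\frac{1}{k^{6.6}\,(\pi/e)^{k}}\qquad\text{for all }1\le i<j\le k.$$
   Context: $f_k(X)=X^k-X^{k-1}-\cdots-X-1$ is the characteristic polynomial of the $k$-generalized Fibonacci sequence; its roots are distinct. *)

theory Defs
  imports "HOL-Analysis.Analysis" "HOL-Computational_Algebra.Polynomial"
begin

definition fib_char_poly :: "nat \<Rightarrow> complex poly" where
  "fib_char_poly k = monom 1 k - (\<Sum>i<k. monom 1 i)"

end

theory Submission
  imports Defs
begin

definition H :: "nat \<Rightarrow> complex \<Rightarrow> complex \<Rightarrow> complex" where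
  "H n u v = (\<Sum>j\<le>n. u^j * v^(n-j))"

lemma H_diff: "u^(Suc n) - v^(Suc n) = (u - v) * H n u v"
  unfolding H_def using diff_power_eq_sum[of u n v] by (simp add: lessThan_Suc_atMost)

lemma H_same: "H n u u = of_nat (Suc n) * u^n"
proof -
  have "H n u u = (\<Sum>j\<le>n. u^n)"
    unfolding H_def by (rule sum.cong) (auto simp: power_add[symmetric])
  then show ?thesis by simp
qed

lemma H_expand:
  "H n a b = of_nat (Suc n) * a^n + (b - a) * (\<Sum>j<n. a^j * H (n-1-j) b a)"
proof -
  have "H n a b - H n a a = (\<Sum>j\<le>n. a^j * (b^(n-j) - a^(n-j)))"
    unfolding H_def by (simp add: sum_subtractf[symmetric] algebra_simps)
  also have "\<dots> = (\<Sum>j<n. a^j * (b^(n-j) - a^(n-j)))"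
    by (simp add: lessThan_Suc_atMost[symmetric])
  also have "\<dots> = (\<Sum>j<n. (b - a) * (a^j * H (n-1-j) b a))"
  proof (rule sum.cong)
    fix j assume "j \<in> {..<n}"
    then have "n - j = Suc (n-1-j)" by auto
    then show "a^j * (b^(n-j) - a^(n-j)) = (b - a) * (a^j * H (n-1-j) b a)"
      using H_diff[of b "n-1-j" a] by simp
  qed simp
  finally show ?thesis by (simp add: H_same sum_distrib_left algebra_simps)
qed

lemma H_bound:
  assumes "cmod u \<le> M" "cmod v \<le> M"
  shows "cmod (H n u v) \<le> real (Suc n) * M^n"
proof -
  have M: "0 \<le> M" using assms(1) norm_ge_zero order_trans by blast
  have "cmod (H n u v) \<le> (\<Sum>j\<le>n. cmod (u^j * v^(n-j)))"
    unfolding H_def by (rule norm_sum)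
  also have "\<dots> \<le> (\<Sum>j\<le>n. M^n)"
  proof (rule sum_mono)
    fix j assume "j \<in> {..n}"
    then have "j + (n-j) = n" by auto
    have "cmod (u^j * v^(n-j)) = cmod u ^ j * cmod v ^ (n-j)"
      by (simp add: norm_mult norm_power)
    also have "\<dots> \<le> M^j * M^(n-j)"
      by (intro mult_mono power_mono assms) (auto simp: M)
    also have "\<dots> = M^n" using \<open>j + (n-j) = n\<close> by (metis power_add)
    finally show "cmod (u^j * v^(n-j)) \<le> M^n" .
  qed
  also have "\<dots> = real (Suc n) * M^n" by simp
  finally show ?thesis .
qed

lemma sum_nj: "(\<Sum>j<n. real (n - j)) = real n * (real n + 1) / 2"
proof (induction n)
  case (Suc n)
  have "(\<Sum>j<Suc n. real (Suc n - j)) = (\<Sum>j<n. real (n - j)) + real n + 1"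
    by (simp add: sum.distrib Suc_diff_le of_nat_diff)
  then show ?case using Suc by (simp add: field_simps)
qed simp

lemma S_bound:
  assumes "cmod b \<le> cmod a"
  shows "cmod (\<Sum>j<n. a^j * H (n-1-j) b a) \<le> cmod a^(n-1) * (real n * (real n + 1) / 2)"
proof -
  have "cmod (\<Sum>j<n. a^j * H (n-1-j) b a) \<le> (\<Sum>j<n. cmod (a^j * H (n-1-j) b a))"
    by (rule norm_sum)
  also have "\<dots> \<le> (\<Sum>j<n. cmod a^(n-1) * real (n - j))"
  proof (rule sum_mono)
    fix j assume j: "j \<in> {..<n}"
    have "cmod (a^j * H (n-1-j) b a) = cmod a ^ j * cmod (H (n-1-j) b a)"
      by (simp add: norm_mult norm_power)
    also have "\<dots> \<le> cmod a ^ j * (real (Suc (n-1-j)) * cmod a ^ (n-1-j))"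
      by (intro mult_left_mono H_bound assms) auto
    also have "\<dots> = cmod a^(j + (n-1-j)) * real (Suc (n-1-j))"
      by (simp add: power_add)
    also have "\<dots> = cmod a^(n-1) * real (n - j)"
      using j by (simp add: Suc_diff_Suc)
    finally show "cmod (a^j * H (n-1-j) b a) \<le> cmod a^(n-1) * real (n - j)" .
  qed
  also have "\<dots> = cmod a^(n-1) * (real n * (real n + 1) / 2)"
    by (subst sum_distrib_left[symmetric]) (simp only: sum_nj)
  finally show ?thesis .
qed

lemma poly_fib: "poly (fib_char_poly k) z = z^k - (\<Sum>i<k. z^i)"
  by (simp add: fib_char_poly_def poly_sum poly_monom)

lemma root_g:
  assumes "poly (fib_char_poly k) z = 0"
  shows "z^(Suc k) - 2*z^k + 1 = 0"
proof -
  have "(z - 1) * (z^k - (\<Sum>i<k. z^i)) = 0" using assms by (simp add: poly_fib)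
  moreover have "(z - 1) * (\<Sum>i<k. z^i) = z^k - 1" using power_diff_1_eq[of z k] by simp
  ultimately have e: "(z - 1) * (z^k - (\<Sum>i<k. z^i)) = 0" "(z - 1) * (\<Sum>i<k. z^i) = z^k - 1" by auto
  have "z^(Suc k) - 2*z^k + 1 = (z - 1) * z^k - (z^k - 1)" by (simp add: algebra_simps)
  also have "\<dots> = (z - 1) * (z^k - (\<Sum>i<k. z^i))" by (simp only: e(2)[symmetric] right_diff_distrib)
  finally show ?thesis using e(1) by simp
qed

lemma root_lt2:
  assumes "poly (fib_char_poly k) z = 0"
  shows "cmod z < 2"
proof (rule ccontr)
  assume "\<not> cmod z < 2"
  then have R: "cmod z \<ge> 2" by simp
  have "z^k = (\<Sum>i<k. z^i)" using assms by (simp add: poly_fib)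
  then have "cmod z ^ k = cmod (\<Sum>i<k. z^i)" by (simp flip: norm_power)
  also have "\<dots> \<le> (\<Sum>i<k. cmod (z ^ i))" by (rule norm_sum)
  also have "\<dots> = (\<Sum>i<k. cmod z ^ i)" by (simp add: norm_power)
  finally have "cmod z ^ k \<le> (\<Sum>i<k. cmod z ^ i)" .
  then have "cmod z ^ k \<le> (\<Sum>i<k. cmod z ^ i)" .
  also have "\<dots> \<le> (cmod z - 1) * (\<Sum>i<k. cmod z ^ i)"
  proof -
    have "0 \<le> (\<Sum>i<k. cmod z ^ i)" by (intro sum_nonneg) auto
    then have "1 * (\<Sum>i<k. cmod z ^ i) \<le> (cmod z - 1) * (\<Sum>i<k. cmod z ^ i)"
      using R by (intro mult_right_mono) auto
    then show ?thesis by simp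
  qed
  also have "\<dots> = cmod z ^ k - 1" using power_diff_1_eq[of "cmod z" k] by simp
  finally show False by simp
qed

lemma pow2_bound: "k \<ge> 4 \<Longrightarrow> 32 * (k+1)^2 \<le> 25 * 2^(k+1)"
proof (induction k rule: dec_induct)
  case base then show ?case by simp
next
  case (step n)
  have "4*4 \<le> n*n" using step(1) by (intro mult_le_mono) auto
  then have "32 * (Suc n + 1)^2 \<le> 2 * (32 * (n+1)^2)" by (simp add: power2_eq_square)
  also have "\<dots> \<le> 2 * (25 * 2^(n+1))" using step(3) by simp
  finally show ?case by simp
qed

lemma x_bound:
  fixes k :: nat and a :: complex
  assumes k: "k \<ge> 4" and ga: "a^(Suc k) - 2*a^k + 1 = 0" and a2: "cmod a \<le> 2"
  shows "cmod (of_nat (Suc k) * a - 2 * of_nat k) \<ge> 7 / (16 * (real k + 1) * (2 * real k + 1))"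
proof -
  define c :: real where "c = 2 * real k / (real k + 1)"
  have c0: "0 \<le> c" "c \<le> 2" unfolding c_def by (auto simp: field_simps)
  have cm2: "c - 2 = - 2 / (real k + 1)" unfolding c_def by (simp add: field_simps)
  have "(1 + (- 1 / (real k + 1)))^k \<ge> 1 + real k * (- 1 / (real k + 1))"
    by (rule Bernoulli_inequality) (simp add: field_simps)
  moreover have "1 + real k * (- 1 / (real k + 1)) = 1 / (real k + 1)" by (simp add: field_simps)
  moreover have "c = 2 * (1 + (- 1 / (real k + 1)))" unfolding c_def by (simp add: field_simps)
  ultimately have "2^k * (1 / (real k + 1)) \<le> 2^k * (1 + (- 1 / (real k + 1)))^k"
    by (intro mult_left_mono) auto
  also have "\<dots> = c^k" using \<open>c = 2 * (1 + (- 1 / (real k + 1)))\<close> by (metis power_mult_distrib)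
  finally have ck: "c^k \<ge> 2^k / (real k + 1)" by simp
  define y where "y = 2 * c^k / (real k + 1)"
  have K: "real k + 1 > 0" by simp
  have "2 * (2^k / (real k + 1)) / (real k + 1) \<le> y"
    unfolding y_def by (intro divide_right_mono mult_left_mono ck) auto
  moreover have "2 * (2^k / (real k + 1)) / (real k + 1) = 2^(k+1) / (real k + 1)^2"
    by (simp add: power2_eq_square)
  ultimately have y2': "y \<ge> 2^(k+1) / (real k + 1)^2" by simp
  have "real (32 * (k+1)^2) \<le> real (25 * 2^(k+1))"
    using pow2_bound[OF k] by (simp only: of_nat_le_iff)
  then have p: "32 * (real k + 1)^2 \<le> 25 * 2^(k+1)" by (simp add: add.commute)
  have "32/25 \<le> (2::real)^(k+1) / (real k + 1)^2"
    using p K by (simp add: divide_simps)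
  then have y1: "y \<ge> 32/25" using y2' by linarith
  have y2: "y \<ge> 2 * 2^k / (real k + 1)^2" using y2' by simp
  define gc where "gc = c^(Suc k) - 2 * c^k + 1"
  have "gc = c^k * (c - 2) + 1" unfolding gc_def by (simp add: algebra_simps)
  also have "\<dots> = 1 - y" unfolding cm2 y_def by simp
  finally have gc: "gc = 1 - y" .
  have gcb: "\<bar>gc\<bar> \<ge> 7 * 2^k / (16 * (real k + 1)^2)"
  proof -
    have "\<bar>gc\<bar> \<ge> 7/32 * y" using gc y1 by simp
    moreover have "7/32 * y \<ge> 7/32 * (2 * 2^k / (real k + 1)^2)" using y2 by simp
    moreover have "7/32 * (2 * 2^k / (real k + 1)^2) = 7 * 2^k / (16 * (real k + 1)^2)" by simp
    ultimately show ?thesis by linarith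
  qed
  have k1: "k = Suc (k - 1)" using k by simp
  have "- complex_of_real gc = (a^(Suc k) - 2*a^k + 1) - ((of_real c)^(Suc k) - 2*(of_real c)^k + 1)"
    using ga by (simp add: gc_def)
  also have "\<dots> = (a^(Suc k) - (of_real c)^(Suc k)) - 2*(a^k - (of_real c)^k)"
    by (simp add: algebra_simps)
  also have "\<dots> = (a - of_real c) * (H k a (of_real c) - 2 * H (k-1) a (of_real c))"
  proof -
    have h1: "a^(Suc k) - (of_real c)^(Suc k) = (a - of_real c) * H k a (of_real c)" by (rule H_diff)
    have h2: "a^k - (of_real c)^k = (a - of_real c) * H (k-1) a (of_real c)"
    proof -
      obtain m where km: "k = Suc m" using k by (cases k) auto
      show ?thesis using H_diff[of a m "of_real c"] km by simp
    qed
    show ?thesis unfolding h1 h2 by (simp add: algebra_simps)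
  qed
  finally have eq: "- complex_of_real gc = (a - of_real c) * (H k a (of_real c) - 2 * H (k-1) a (of_real c))" .
  have cc: "cmod (complex_of_real c) \<le> 2" using c0 by simp
  have "cmod (H k a (of_real c) - 2 * H (k-1) a (of_real c)) \<le> cmod (H k a (of_real c)) + 2 * cmod (H (k-1) a (of_real c))"
    by (metis norm_triangle_ineq4 norm_mult norm_numeral)
  also have "\<dots> \<le> real (Suc k) * 2^k + 2 * (real (Suc (k-1)) * 2^(k-1))"
    by (intro add_mono mult_left_mono H_bound a2 cc) auto
  also have "\<dots> = (2 * real k + 1) * 2^k"
  proof -
    have "(2::real)^k = 2 * 2^(k-1)" using k1 by (metis power_Suc)
    then show ?thesis using k by (simp add: of_nat_diff algebra_simps)
  qed
  finally have hb: "cmod (H k a (of_real c) - 2 * H (k-1) a (of_real c)) \<le> (2 * real k + 1) * 2^k" .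
  have "\<bar>gc\<bar> \<le> cmod (a - of_real c) * ((2 * real k + 1) * 2^k)"
  proof -
    have "\<bar>gc\<bar> = cmod (- complex_of_real gc)" by simp
    also have "\<dots> = cmod (a - of_real c) * cmod (H k a (of_real c) - 2 * H (k-1) a (of_real c))"
      by (simp only: eq norm_mult)
    also have "\<dots> \<le> cmod (a - of_real c) * ((2 * real k + 1) * 2^k)"
      by (intro mult_left_mono hb) auto
    finally show ?thesis .
  qed
  with gcb have "7 * 2^k / (16 * (real k + 1)^2) \<le> cmod (a - of_real c) * ((2 * real k + 1) * 2^k)"
    by linarith
  then have "(7 * 2^k / (16 * (real k + 1)^2)) / ((2 * real k + 1) * 2^k) \<le> cmod (a - of_real c) * ((2 * real k + 1) * 2^k) / ((2 * real k + 1) * 2^k)"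
    by (rule divide_right_mono) simp
  moreover have "(7 * 2^k / (16 * (real k + 1)^2)) / ((2 * real k + 1) * 2^k) = 7 / (16 * (real k + 1)^2 * (2 * real k + 1))"
    by simp
  moreover have "cmod (a - of_real c) * ((2 * real k + 1) * 2^k) / ((2 * real k + 1) * 2^k) = cmod (a - of_real c)"
    by (simp add: add_pos_pos)
  ultimately have ac: "7 / (16 * (real k + 1)^2 * (2 * real k + 1)) \<le> cmod (a - of_real c)"
    by simp
  have "of_nat (Suc k) * a - 2 * of_nat k = of_real (real k + 1) * (a - of_real c)"
  proof -
    have "(real k + 1) * c = 2 * real k" unfolding c_def by simp
    then have "complex_of_real (real k + 1) * complex_of_real c = 2 * of_nat k"
      by (metis of_real_mult of_real_of_nat_eq of_real_numeral)
    then show ?thesis by (simp add: algebra_simps)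
  qed
  then have "cmod (of_nat (Suc k) * a - 2 * of_nat k) = cmod (complex_of_real (real k + 1)) * cmod (a - of_real c)"
    by (simp only: norm_mult)
  also have "cmod (complex_of_real (real k + 1)) = real k + 1" by (simp only: norm_of_real)
  finally have "cmod (of_nat (Suc k) * a - 2 * of_nat k) = (real k + 1) * cmod (a - of_real c)" .
  moreover have "(real k + 1) * (7 / (16 * (real k + 1)^2 * (2 * real k + 1))) = 7 / (16 * (real k + 1) * (2 * real k + 1))"
  proof -
    have n1: "real k + 1 \<noteq> 0" "2 * real k + 1 \<noteq> 0" by linarith+
    have gen: "\<And>K B::real. K \<noteq> 0 \<Longrightarrow> B \<noteq> 0 \<Longrightarrow> K * (7 / (16 * K^2 * B)) = 7 / (16 * K * B)"
      by (simp add: power2_eq_square field_simps)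
    show ?thesis using gen[OF n1] .
  qed
  moreover have "(real k + 1) * (7 / (16 * (real k + 1)^2 * (2 * real k + 1))) \<le> (real k + 1) * cmod (a - of_real c)"
    using ac by (intro mult_left_mono) auto
  ultimately show ?thesis by simp
qed

lemma poly_ineq:
  fixes k :: real assumes k: "k \<ge> 4"
  shows "8 * (k + 1) * (2 * k + 1) * k * (3 * k - 1) \<le> 7 * k^6"
proof -
  have kk: "4 * k \<le> k * k" using k by (intro mult_right_mono) auto
  have k2: "k^2 \<ge> 16" using kk k unfolding power2_eq_square by linarith
  have e1: "(k + 1) * (2 * k + 1) = 2 * (k*k) + 3 * k + 1" by (simp add: algebra_simps)
  have a1: "(k + 1) * (2 * k + 1) \<le> 3 * k^2" unfolding e1 power2_eq_square using kk k by linarith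
  have e2: "k * (3 * k - 1) = 3 * (k*k) - k" by (simp add: algebra_simps)
  have a2: "k * (3 * k - 1) \<le> 3 * k^2" unfolding e2 power2_eq_square using k by linarith
  have "8 * (k + 1) * (2 * k + 1) * k * (3 * k - 1) = 8 * ((k + 1) * (2 * k + 1)) * (k * (3 * k - 1))"
    by (simp add: algebra_simps)
  also have "\<dots> \<le> 8 * (3 * k^2) * (3 * k^2)"
  proof (rule mult_mono)
    show "8 * ((k + 1) * (2 * k + 1)) \<le> 8 * (3 * k^2)" using a1 by simp
    show "k * (3 * k - 1) \<le> 3 * k^2" by (rule a2)
    show "0 \<le> 8 * (3 * k^2)" by simp
    show "0 \<le> k * (3 * k - 1)" using k by (intro mult_nonneg_nonneg) auto
  qed
  also have "\<dots> = 72 * k^2 * k^2" by (simp add: algebra_simps)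
  also have "\<dots> \<le> 7 * k^2 * k^2 * k^2"
    using k2 by (intro mult_right_mono) auto
  also have "\<dots> = 7 * k^6" by (simp add: power_add[symmetric])
  finally show ?thesis .
qed

lemma main_wlog:
  fixes k :: nat and a b :: complex
  assumes k: "k \<ge> 4"
    and ra: "poly (fib_char_poly k) a = 0"
    and rb: "poly (fib_char_poly k) b = 0"
    and ab: "a \<noteq> b"
    and ba: "cmod b \<le> cmod a"
  shows "1 \<le> cmod (a - b) * real k ^ 6"
proof -
  define R where "R = cmod a"
  define x where "x = cmod (of_nat (Suc k) * a - 2 * of_nat k)"
  define d where "d = cmod (a - b)"
  have ga: "a^(Suc k) - 2*a^k + 1 = 0" by (rule root_g[OF ra])
  have gb: "b^(Suc k) - 2*b^k + 1 = 0" by (rule root_g[OF rb])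
  have a2: "cmod a < 2" by (rule root_lt2[OF ra])
  obtain m where km: "k = Suc m" using k by (cases k) auto
  have m3: "m \<ge> 3" using k km by simp
  obtain p where mp: "m = Suc p" using m3 by (cases m) auto
  have a0: "a \<noteq> 0" using ga k by (cases k) auto
  then have R0: "R > 0" unfolding R_def by simp
  define S1 where "S1 = (\<Sum>j<k. a^j * H (k-1-j) b a)"
  define S2 where "S2 = (\<Sum>j<m. a^j * H (m-1-j) b a)"
  have "0 = (a^(Suc k) - 2*a^k + 1) - (b^(Suc k) - 2*b^k + 1)" using ga gb by simp
  also have "\<dots> = (a^(Suc k) - b^(Suc k)) - 2 * (a^(Suc m) - b^(Suc m))"
    using km by (simp add: algebra_simps)
  also have "\<dots> = (a - b) * (H k a b - 2 * H m a b)"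
    by (simp only: H_diff) (simp add: algebra_simps)
  finally have "H k a b - 2 * H m a b = 0" using ab by simp
  then have "of_nat (Suc k) * a^k + (b - a) * S1 - 2 * (of_nat (Suc m) * a^m + (b - a) * S2) = 0"
    unfolding S1_def S2_def by (simp only: H_expand[of k a b] H_expand[of m a b])
  then have eq: "a^m * (of_nat (Suc k) * a - 2 * of_nat k) = (b - a) * (2 * S2 - S1)"
    using km by (simp add: algebra_simps)
  have "R^m * x = d * cmod (2 * S2 - S1)"
    unfolding R_def x_def d_def
    using arg_cong[OF eq, of cmod] norm_minus_commute[of b a] by (simp add: norm_mult norm_power)
  also have "\<dots> \<le> d * (2 * cmod S2 + cmod S1)"
  proof -
    have "cmod (2 * S2 - S1) \<le> cmod (2 * S2) + cmod S1" by (rule norm_triangle_ineq4)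
    then show ?thesis unfolding d_def by (intro mult_left_mono) auto
  qed
  also have "\<dots> \<le> d * (2 * (R^(m-1) * (real m * (real m + 1) / 2)) + R^(k-1) * (real k * (real k + 1) / 2))"
    unfolding d_def R_def S1_def S2_def
    by (intro mult_left_mono add_mono S_bound ba) auto
  finally have ineq: "R^m * x \<le> d * (2 * (R^(m-1) * (real m * (real m + 1) / 2)) + R^(k-1) * (real k * (real k + 1) / 2))" .
  have Rm: "R^m = R * R^p" and Rk: "R^(k-1) = R * R^p" and Rm1: "R^(m-1) = R^p" using km mp by auto
  have rk: "real m = real k - 1" using km by simp
  have "R^p * (R * x) \<le> R^p * (d * (real k * (real k - 1) + R * (real k * (real k + 1) / 2)))"
  proof -
    have "R^p * (R * x) = R^m * x" unfolding Rm by (simp add: algebra_simps)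
    also have "\<dots> \<le> d * (2 * (R^(m-1) * (real m * (real m + 1) / 2)) + R^(k-1) * (real k * (real k + 1) / 2))"
      by (rule ineq)
    also have "\<dots> = R^p * (d * (real k * (real k - 1) + R * (real k * (real k + 1) / 2)))"
      unfolding Rk Rm1 rk by (simp add: field_simps)
    finally show ?thesis .
  qed
  then have main: "R * x \<le> d * (real k * (real k - 1) + R * (real k * (real k + 1) / 2))"
    using R0 by (simp add: mult_le_cancel_left)
  have kr: "real k \<ge> 4" using k by simp
  have d0: "d \<ge> 0" unfolding d_def by simp
  show ?thesis
  proof (cases "R \<ge> 1")
    case True
    define Q where "Q = real k * (real k - 1) + real k * (real k + 1) / 2"
    have xb: "x \<ge> 7 / (16 * (real k + 1) * (2 * real k + 1))"
      unfolding x_def by (rule x_bound[OF k ga]) (use a2 in simp)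
    have "R * x \<le> d * (R * (real k * (real k - 1)) + R * (real k * (real k + 1) / 2))"
    proof -
      have Z0: "0 \<le> real k * (real k - 1)" using kr by simp
      have "1 * (real k * (real k - 1)) \<le> R * (real k * (real k - 1))"
        using True Z0 by (rule mult_right_mono)
      then have h: "real k * (real k - 1) + R * (real k * (real k + 1) / 2) \<le> R * (real k * (real k - 1)) + R * (real k * (real k + 1) / 2)"
        by simp
      show ?thesis using order_trans[OF main mult_left_mono[OF h d0]] .
    qed
    also have "\<dots> = R * (d * Q)" unfolding Q_def by (simp add: algebra_simps)
    finally have "x \<le> d * Q" using True by simp
    then have X0: "7 / (16 * (real k + 1) * (2 * real k + 1)) \<le> d * Q" using xb by linarith
    have "16 * (real k + 1) * (2 * real k + 1) * Q = 8 * (real k + 1) * (2 * real k + 1) * real k * (3 * real k - 1)"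
      unfolding Q_def by (simp add: field_simps)
    also have "\<dots> \<le> 7 * real k ^ 6" by (rule poly_ineq[OF kr])
    finally have P: "16 * (real k + 1) * (2 * real k + 1) * Q \<le> 7 * real k ^ 6" .
    have pos: "16 * (real k + 1) * (2 * real k + 1) > 0" by simp
    have "7 \<le> 16 * (real k + 1) * (2 * real k + 1) * (d * Q)"
      using X0 pos by (simp add: divide_simps mult.commute)
    also have "\<dots> = d * (16 * (real k + 1) * (2 * real k + 1) * Q)" by (simp add: algebra_simps)
    also have "\<dots> \<le> d * (7 * real k ^ 6)" using P d0 by (rule mult_left_mono)
    finally show ?thesis unfolding d_def by simp
  next
    case False
    then have R1: "R < 1" by simp
    have "a^k * (a - 2) = -1" using ga by (simp add: algebra_simps)
    then have "cmod (a^k * (a - 2)) = 1" by simp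
    then have h1: "R^k * cmod (a - 2) = 1" unfolding R_def by (simp add: norm_mult norm_power)
    have "cmod (a - 2) \<le> R + 2" unfolding R_def
      using norm_triangle_ineq4[of a 2] by simp
    then have "R^k * cmod (a - 2) \<le> R^k * (R + 2)" using R0 by (intro mult_left_mono) auto
    then have "1 \<le> R^k * (R + 2)" using h1 by simp
    also have "\<dots> \<le> R^k * 3" using R1 R0 by (intro mult_left_mono) auto
    finally have Rk3: "R^k \<ge> 1/3" by simp
    have "R^k \<le> R^1" using R1 R0 k by (intro power_decreasing) auto
    then have R3: "R \<ge> 1/3" using Rk3 by simp
    have xk: "x \<ge> real k - 1"
    proof -
      have "cmod (2 * of_nat k :: complex) \<le> cmod (of_nat (Suc k) * a - 2 * of_nat k) + cmod (of_nat (Suc k) * a)"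
      proof -
        have "(2 * of_nat k :: complex) = of_nat (Suc k) * a - (of_nat (Suc k) * a - 2 * of_nat k)" by simp
        then have "cmod (2 * of_nat k :: complex) = cmod (of_nat (Suc k) * a - (of_nat (Suc k) * a - 2 * of_nat k))"
          by (rule arg_cong)
        also have "\<dots> \<le> cmod (of_nat (Suc k) * a) + cmod (of_nat (Suc k) * a - 2 * of_nat k)"
          by (rule norm_triangle_ineq4)
        finally show ?thesis by simp
      qed
      moreover have "cmod (2 * of_nat k :: complex) = 2 * real k" by (simp add: norm_mult)
      moreover have "cmod (of_nat (Suc k) * a) = (real k + 1) * R" unfolding R_def
        by (simp only: norm_mult norm_of_nat) simp
      moreover have "(real k + 1) * R \<le> real k + 1" using R1 by simp
      ultimately show ?thesis unfolding x_def by linarith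
    qed
    have "1 \<le> R * x"
    proof -
      have "1/3 * 3 \<le> R * x" using R3 xk kr by (intro mult_mono) auto
      then show ?thesis by simp
    qed
    also have "\<dots> \<le> d * (real k * (real k - 1) + R * (real k * (real k + 1) / 2))" by (rule main)
    also have "\<dots> \<le> d * real k ^ 6"
    proof (rule mult_left_mono[OF _ d0])
      have "R * (real k * (real k + 1) / 2) \<le> real k * (real k + 1) / 2"
        using R1 R0 kr by (intro mult_right_mono[of R 1, simplified]) auto
      moreover have "real k * (real k - 1) + real k * (real k + 1) / 2 \<le> 2 * (real k * real k)"
        by (simp add: algebra_simps)
      moreover have "2 * (real k * real k) \<le> real k ^ 6"
      proof -
        have "2 * (real k * real k) \<le> real k ^ 4 * (real k * real k)"
        proof (rule mult_right_mono)
          have "(4::real)^4 \<le> real k ^ 4" using kr by (intro power_mono) auto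
          then show "2 \<le> real k ^ 4" by simp
        qed simp
        also have "\<dots> = real k ^ 6" proof -
          have "real k ^ 6 = real k ^ 4 * real k ^ 2" by (simp add: power_add[symmetric])
          then show ?thesis by (simp add: power2_eq_square)
        qed
        finally show ?thesis .
      qed
      ultimately show "real k * (real k - 1) + R * (real k * (real k + 1) / 2) \<le> real k ^ 6" by linarith
    qed
    finally show ?thesis unfolding d_def by simp
  qed
qed

theorem theorem2:
  fixes k :: nat and a b :: complex
  assumes "k \<ge> 4"
    and "poly (fib_char_poly k) a = 0"
    and "poly (fib_char_poly k) b = 0"
    and "a \<noteq> b"
  shows "cmod (a - b) > 1 / (real k powr 6.6 * (pi / exp 1) ^ k)"
proof -
  have D: "1 \<le> cmod (a - b) * real k ^ 6"
  proof (cases "cmod b \<le> cmod a")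
    case True
    then show ?thesis using main_wlog[OF assms] by simp
  next
    case False
    then have "1 \<le> cmod (b - a) * real k ^ 6"
      using main_wlog[OF assms(1,3,2)] assms(4) by simp
    then show ?thesis by (simp add: norm_minus_commute)
  qed
  have kr: "real k \<ge> 4" using assms(1) by simp
  have "real k powr 6 < real k powr 6.6" using kr by (intro powr_less_mono) auto
  moreover have "real k powr 6 = real k ^ 6" by simp
  ultimately have p1: "real k ^ 6 < real k powr 6.6" by simp
  have "exp 1 \<le> (3::real)" by (rule exp_le)
  moreover have "pi > 3" by (rule pi_gt3)
  ultimately have "pi / exp 1 \<ge> 1" by simp
  then have p2: "(pi / exp 1) ^ k \<ge> 1" by (rule one_le_power)
  have k6: "real k ^ 6 > 0" using kr by simp
  have "real k ^ 6 * 1 < real k powr 6.6 * (pi / exp 1) ^ k"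
    using p1 p2 k6 by (intro mult_less_le_imp_less) auto
  then have "1 / (real k powr 6.6 * (pi / exp 1) ^ k) < 1 / real k ^ 6"
    using k6 by (intro divide_strict_left_mono) auto
  also have "\<dots> \<le> cmod (a - b)" using D k6 by (simp add: divide_simps mult.commute)
  finally show ?thesis .
qed

end
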